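(* Let $\Delta$ be a compact Hausdorff space, $u\colon\Delta\to\mathbb R$ continuous, $v\colon\Delta\to\mathbb R$ upper semicontinuous, $f(\alpha)=\max\{v(\bm w):u(\bm w)=\alpha\}$ (with $\max\varnothing=-\infty$), $\tau(q)=\min_{\bm w\in\Delta}\{q\,u(\bm w)-v(\bm w)\}$, and $M(q)=\{\bm w\in\Delta: q\,u(\bm w)-v(\bm w)=\tau(q)\}$. If $q\in\mathbb R$ is such that $M(q)$ is connected, then $f(\alpha)=\tau^*(\alpha)$ for all $\alpha\in\partial\tau(q)$. If moreover $M(q)$ is a singleton, then $\tau$ is differentiable at $q$.
   Context: Concave conjugate: $\tau^*(\alpha)=\inf_{q\in\mathbb R}(q\alpha-\tau(q))$. For the concave function $\tau$, $\partial\tau(q)=\{\alpha:\alpha(y-q)+\tau(q)\ge\tau(y)\ \forall y\}=[\partial^+\tau(q),\partial^-\tau(q)]$ (right and left derivatives). *)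

theory Defs
  imports "HOL-Analysis.Analysis"
begin

definition usc_on :: "'a::topological_space set \<Rightarrow> ('a \<Rightarrow> real) \<Rightarrow> bool" where
  "usc_on D v \<longleftrightarrow> (\<forall>a. openin (top_of_set D) {x \<in> D. v x < a})"

text \<open>Concave conjugate, valued in extended reals (the infimum may be -infinity).\<close>
definition concave_conj :: "(real \<Rightarrow> real) \<Rightarrow> real \<Rightarrow> ereal" where
  "concave_conj \<tau> \<alpha> = (INF q. ereal (q * \<alpha> - \<tau> q))"

definition superdiff :: "(real \<Rightarrow> real) \<Rightarrow> real \<Rightarrow> real set" where
  "superdiff \<tau> q = {\<alpha>. \<forall>y. \<alpha> * (y - q) + \<tau> q \<ge> \<tau> y}"

end

theory Submission
  imports Defs
begin

lemma usc_shift: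
  assumes "usc_on D v" "continuous_on D c"
  shows "usc_on D (\<lambda>x. v x + c x)"
  unfolding usc_on_def
proof
  fix a
  have eq: "{x \<in> D. v x + c x < a} = (\<Union>r. {x \<in> D. v x < r} \<inter> (D \<inter> c -` {..<a - r}))"
  proof (rule set_eqI, rule iffI)
    fix x assume x: "x \<in> {x \<in> D. v x + c x < a}"
    let ?r = "(v x + a - c x) / 2"
    have "v x < ?r" "c x < a - ?r" using x by (auto simp: field_simps)
    then have "x \<in> {x \<in> D. v x < ?r} \<inter> (D \<inter> c -` {..<a - ?r})" using x by auto
    then show "x \<in> (\<Union>r. {x \<in> D. v x < r} \<inter> (D \<inter> c -` {..<a - r}))" by blast
  qed auto
  have "\<And>r. openin (top_of_set D) ({x \<in> D. v x < r} \<inter> (D \<inter> c -` {..<a - r}))"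
    using assms unfolding usc_on_def
    by (intro openin_Int continuous_openin_preimage_gen) auto
  then show "openin (top_of_set D) {x \<in> D. v x + c x < a}"
    unfolding eq by (intro openin_Union) auto
qed

lemma usc_attains_max:
  assumes "usc_on D h" "S \<subseteq> D" "compact S" "S \<noteq> {}"
  shows "\<exists>x\<in>S. \<forall>y\<in>S. h y \<le> h x"
proof (rule ccontr)
  assume no: "\<not> ?thesis"
  have "\<forall>w. \<exists>T. open T \<and> {x\<in>D. h x < h w} = D \<inter> T"
    using assms(1) unfolding usc_on_def openin_open by blast
  then obtain T where T: "\<And>w. open (T w)" "\<And>w. {x\<in>D. h x < h w} = D \<inter> T w"
    by metis
  have cov: "S \<subseteq> \<Union>(T ` S)"
  proof
    fix x assume x: "x \<in> S"
    then obtain y where y: "y \<in> S" "h x < h y" using no by (meson not_le)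
    then have "x \<in> D \<inter> T y" using T(2)[of y] x assms(2) by blast
    then show "x \<in> \<Union>(T ` S)" using y by blast
  qed
  obtain F where F: "F \<subseteq> S" "finite F" "S \<subseteq> \<Union>(T ` F)"
    using compactE_image[OF assms(3) _ cov] T(1) by metis
  have "F \<noteq> {}" using F assms(4) by auto
  then have "Max (h ` F) \<in> h ` F" using F(2) by simp
  then obtain w0 where w0: "w0 \<in> F" "h w0 = Max (h ` F)" by (metis imageE)
  then have "w0 \<in> S" using F by auto
  then obtain w where w: "w \<in> F" "w0 \<in> T w" using F(3) by blast
  then have "h w0 < h w" using T(2)[of w] \<open>w0 \<in> S\<close> assms(2) by blast
  moreover have "h w \<le> Max (h ` F)" using w F(2) by simp
  ultimately show False using w0 by simp
qed

lemma min_attained: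
  assumes "compact D" "continuous_on D u" "usc_on D v" "S \<subseteq> D" "compact S" "S \<noteq> {}"
  shows "\<exists>x\<in>S. \<forall>y\<in>S. p * u x - v x \<le> p * u y - v y"
proof -
  have "continuous_on D (\<lambda>x. - p * u x)" using assms(2) by (intro continuous_intros)
  then have "usc_on D (\<lambda>x. v x + - p * u x)" using usc_shift assms(3) by blast
  from usc_attains_max[OF this assms(4-6)] show ?thesis by (auto simp: algebra_simps)
qed

lemma tau_attained:
  assumes "compact D" "D \<noteq> {}" "continuous_on D u" "usc_on D v"
    and tau: "\<And>q. \<tau> q = Inf {q * u w - v w | w. w \<in> D}"
  shows "\<exists>x\<in>D. \<tau> p = p * u x - v x \<and> (\<forall>y\<in>D. \<tau> p \<le> p * u y - v y)"
proof -
  obtain x where x: "x \<in> D" "\<forall>y\<in>D. p * u x - v x \<le> p * u y - v y"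
    using min_attained[OF assms(1,3,4) order_refl assms(1,2)] by blast
  have "\<tau> p = p * u x - v x" unfolding tau
    by (rule cInf_eq_minimum) (use x in auto)
  then show ?thesis using x by auto
qed

lemma sep:
  assumes "compact D" "D \<noteq> {}" "continuous_on D u" "usc_on D v"
    and tau: "\<And>q. \<tau> q = Inf {q * u w - v w | w. w \<in> D}"
    and K: "K \<subseteq> D" "compact K" "\<And>w. w \<in> K \<Longrightarrow> q * u w - v w \<noteq> \<tau> q"
  shows "\<exists>d>0. \<forall>y. \<bar>y - q\<bar> < d \<longrightarrow> (\<forall>w\<in>K. y * u w - v w > \<tau> q + (y - q) * \<beta>)"
proof (cases "K = {}")
  case True then show ?thesis by (intro exI[of _ 1]) auto
next
  case False
  obtain k where k: "k \<in> K" "\<forall>y\<in>K. q * u k - v k \<le> q * u y - v y"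
    using min_attained[OF assms(1,3,4) K(1,2) False] by blast
  define m where "m = q * u k - v k"
  obtain x where x: "x \<in> D" "\<tau> q = q * u x - v x" "\<forall>y\<in>D. \<tau> q \<le> q * u y - v y"
    using tau_attained[OF assms(1-4) tau] by blast
  have "m > \<tau> q" using x(3) k K m_def by force
  have "compact (u ` D)" using assms(1,3) compact_continuous_image by blast
  then obtain C where C: "C > 0" "\<And>w. w \<in> D \<Longrightarrow> \<bar>u w\<bar> \<le> C"
    using compact_imp_bounded bounded_pos by (metis image_eqI real_norm_def)
  define d where "d = (m - \<tau> q) / (C + \<bar>\<beta>\<bar>)"
  have "C + \<bar>\<beta>\<bar> > 0" using C by linarith
  then have "d > 0" using \<open>m > \<tau> q\<close> d_def by simp
  moreover have "y * u w - v w > \<tau> q + (y - q) * \<beta>" if y: "\<bar>y - q\<bar> < d" and w: "w \<in> K" for y w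
  proof -
    have "\<bar>y - q\<bar> * (C + \<bar>\<beta>\<bar>) < m - \<tau> q"
      using y \<open>C + \<bar>\<beta>\<bar> > 0\<close> unfolding d_def by (simp add: pos_less_divide_eq)
    moreover have "\<bar>(y - q) * u w\<bar> \<le> \<bar>y - q\<bar> * C"
      using C(2)[of w] w K(1) by (simp add: abs_mult) (metis abs_ge_zero mult_left_mono subsetD)
    moreover have "\<bar>(y - q) * \<beta>\<bar> = \<bar>y - q\<bar> * \<bar>\<beta>\<bar>" by (simp add: abs_mult)
    moreover have "q * u w - v w \<ge> m" using k w m_def by auto
    moreover have "y * u w - v w = (q * u w - v w) + (y - q) * u w" by (simp add: algebra_simps)
    ultimately show ?thesis by (smt (verit) distrib_left)
  qed
  ultimately show ?thesis by blast
qed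

lemma partA:
  assumes "compact D" "D \<noteq> {}" "continuous_on D u" "usc_on D v"
    and tau: "\<And>q. \<tau> q = Inf {q * u w - v w | w. w \<in> D}"
    and sd: "\<forall>y. \<alpha> * (y - q) + \<tau> q \<ge> \<tau> y"
  shows "\<exists>w\<in>D. q * u w - v w = \<tau> q \<and> u w \<le> \<alpha>"
proof (rule ccontr)
  assume no: "\<not> ?thesis"
  define K where "K = D \<inter> u -` {..\<alpha>}"
  have "closedin (top_of_set D) K" unfolding K_def
    by (rule continuous_closedin_preimage[OF assms(3)]) auto
  then have cK: "compact K" using closedin_compact assms(1) by blast
  have KD: "K \<subseteq> D" unfolding K_def by auto
  have Kn: "\<And>w. w \<in> K \<Longrightarrow> q * u w - v w \<noteq> \<tau> q" using no unfolding K_def by auto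
  obtain d where d: "d > 0" "\<forall>y. \<bar>y - q\<bar> < d \<longrightarrow> (\<forall>w\<in>K. y * u w - v w > \<tau> q + (y - q) * \<alpha>)"
    using sep[OF assms(1-4) tau KD cK Kn] by blast
  define y where "y = q + d / 2"
  have yq: "y - q > 0" "\<bar>y - q\<bar> < d" using d(1) y_def by auto
  obtain wy where wy: "wy \<in> D" "\<tau> y = y * u wy - v wy"
    using tau_attained[OF assms(1-4) tau] by blast
  obtain x where x: "\<forall>z\<in>D. \<tau> q \<le> q * u z - v z"
    using tau_attained[OF assms(1-4) tau] by blast
  have le: "\<tau> y \<le> \<alpha> * (y - q) + \<tau> q" using sd by blast
  show False
  proof (cases "u wy \<le> \<alpha>")
    case True
    then have "wy \<in> K" using wy unfolding K_def by auto
    then have "y * u wy - v wy > \<tau> q + (y - q) * \<alpha>" using d(2) yq by blast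
    then show False using le wy by (simp add: algebra_simps)
  next
    case False
    then have "(y - q) * u wy > (y - q) * \<alpha>" using yq by (simp add: mult_strict_left_mono)
    moreover have "\<tau> q \<le> q * u wy - v wy" using x wy by blast
    moreover have "y * u wy - v wy = (q * u wy - v wy) + (y - q) * u wy" by (simp add: algebra_simps)
    ultimately show False using le wy by (simp add: algebra_simps)
  qed
qed

lemma partB:
  assumes "compact D" "D \<noteq> {}" "continuous_on D u" "usc_on D v"
    and tau: "\<And>q. \<tau> q = Inf {q * u w - v w | w. w \<in> D}"
    and sd: "\<forall>y. \<alpha> * (y - q) + \<tau> q \<ge> \<tau> y"
  shows "\<exists>w\<in>D. q * u w - v w = \<tau> q \<and> u w \<ge> \<alpha>"
proof -
  have c: "continuous_on D (\<lambda>w. - u w)" using assms(3) by (intro continuous_intros)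
  have t: "\<And>p. (\<lambda>p. \<tau> (- p)) p = Inf {p * (- u w) - v w | w. w \<in> D}"
    using tau by simp
  have s: "\<forall>y. (- \<alpha>) * (y - (- q)) + (\<lambda>p. \<tau> (- p)) (- q) \<ge> (\<lambda>p. \<tau> (- p)) y"
  proof
    fix y show "(- \<alpha>) * (y - (- q)) + (\<lambda>p. \<tau> (- p)) (- q) \<ge> (\<lambda>p. \<tau> (- p)) y"
      using sd[rule_format, of "- y"] by (simp add: algebra_simps)
  qed
  from partA[OF assms(1,2) c assms(4) t s] show ?thesis by auto
qed

theorem corollaryc:
  fixes D :: "'a::t2_space set" and u v :: "'a \<Rightarrow> real"
    and f :: "real \<Rightarrow> ereal" and \<tau> :: "real \<Rightarrow> real" and M :: "real \<Rightarrow> 'a set"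
    and q :: real
  assumes "compact D" and "D \<noteq> {}"
    and "continuous_on D u"
    and "usc_on D v"
    and "\<And>\<alpha>. f \<alpha> = Sup {ereal (v w) | w. w \<in> D \<and> u w = \<alpha>}"
    and "\<And>q. \<tau> q = Inf {q * u w - v w | w. w \<in> D}"
    and "\<And>q. M q = {w \<in> D. q * u w - v w = \<tau> q}"
    and "connected (M q)"
  shows "(\<forall>\<alpha> \<in> superdiff \<tau> q. f \<alpha> = concave_conj \<tau> \<alpha>)
    \<and> ((\<exists>w. M q = {w}) \<longrightarrow> \<tau> differentiable (at q))"
proof
  note base = assms(1-4) assms(6)
  show "\<forall>\<alpha> \<in> superdiff \<tau> q. f \<alpha> = concave_conj \<tau> \<alpha>"
  proof
    fix \<alpha> assume "\<alpha> \<in> superdiff \<tau> q"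
    then have sd: "\<forall>y. \<alpha> * (y - q) + \<tau> q \<ge> \<tau> y" unfolding superdiff_def by blast
    obtain w1 where w1: "w1 \<in> D" "q * u w1 - v w1 = \<tau> q" "u w1 \<le> \<alpha>"
      using partA[OF base sd] by blast
    obtain w2 where w2: "w2 \<in> D" "q * u w2 - v w2 = \<tau> q" "u w2 \<ge> \<alpha>"
      using partB[OF base sd] by blast
    have MD: "M q \<subseteq> D" using assms(7) by auto
    have "connected (u ` M q)"
      using connected_continuous_image[OF continuous_on_subset[OF assms(3) MD] assms(8)] .
    moreover have "u w1 \<in> u ` M q" "u w2 \<in> u ` M q" using w1 w2 assms(7) by auto
    ultimately have "\<alpha> \<in> u ` M q" unfolding connected_iff_interval using w1 w2 by blast
    then obtain w where w: "w \<in> D" "q * u w - v w = \<tau> q" "u w = \<alpha>" using assms(7) by auto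
    have "concave_conj \<tau> \<alpha> \<le> ereal (q * \<alpha> - \<tau> q)"
      unfolding concave_conj_def by (rule INF_lower) simp
    also have "\<dots> = ereal (v w)" using w by (simp add: algebra_simps)
    also have "\<dots> \<le> f \<alpha>" unfolding assms(5) by (rule Sup_upper) (use w in auto)
    finally have 1: "concave_conj \<tau> \<alpha> \<le> f \<alpha>" .
    have 2: "f \<alpha> \<le> concave_conj \<tau> \<alpha>"
      unfolding assms(5) concave_conj_def
    proof (rule Sup_least)
      fix z assume "z \<in> {ereal (v w) | w. w \<in> D \<and> u w = \<alpha>}"
      then obtain w' where w': "w' \<in> D" "u w' = \<alpha>" "z = ereal (v w')" by blast
      show "z \<le> (INF p. ereal (p * \<alpha> - \<tau> p))"
      proof (rule INF_greatest)
        fix p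
        obtain x where "\<forall>y\<in>D. \<tau> p \<le> p * u y - v y"
          using tau_attained[OF base] by blast
        then have "\<tau> p \<le> p * u w' - v w'" using w' by blast
        then show "z \<le> ereal (p * \<alpha> - \<tau> p)" using w' by simp
      qed
    qed
    show "f \<alpha> = concave_conj \<tau> \<alpha>" using 1 2 by simp
  qed
  show "(\<exists>w. M q = {w}) \<longrightarrow> \<tau> differentiable (at q)"
  proof
    assume "\<exists>w. M q = {w}"
    then obtain w0 where w0: "M q = {w0}" by blast
    then have w0D: "w0 \<in> D" "q * u w0 - v w0 = \<tau> q" using assms(7)[of q] by auto
    have "(\<tau> has_real_derivative u w0) (at q)"
      unfolding has_field_derivative_iff
    proof (rule LIM_I)
      fix r :: real assume r: "r > 0"
      define e where "e = r / 2"
      have e: "e > 0" "e < r" using r e_def by auto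
      define K where "K = D \<inter> u -` {t. e \<le> \<bar>t - u w0\<bar>}"
      have "closed {t. e \<le> \<bar>t - u w0\<bar>}"
        by (intro closed_Collect_le continuous_intros)
      then have "closedin (top_of_set D) K" unfolding K_def
        by (rule continuous_closedin_preimage[OF assms(3)])
      then have cK: "compact K" using closedin_compact assms(1) by blast
      have KD: "K \<subseteq> D" unfolding K_def by auto
      have Kn: "\<And>w. w \<in> K \<Longrightarrow> q * u w - v w \<noteq> \<tau> q"
      proof
        fix w assume "w \<in> K" "q * u w - v w = \<tau> q"
        then have "w \<in> M q" using assms(7) KD by auto
        then have "w = w0" using w0 by auto
        then show False using \<open>w \<in> K\<close> e unfolding K_def by auto
      qed
      obtain d where d: "d > 0"
        "\<forall>y. \<bar>y - q\<bar> < d \<longrightarrow> (\<forall>w\<in>K. y * u w - v w > \<tau> q + (y - q) * u w0)"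
        using sep[OF base KD cK Kn] by blast
      have "norm ((\<tau> x - \<tau> q) / (x - q) - u w0) < r" if x: "x \<noteq> q" "norm (x - q) < d" for x
      proof -
        obtain wy where wy: "wy \<in> D" "\<tau> x = x * u wy - v wy" "\<forall>y\<in>D. \<tau> x \<le> x * u y - v y"
          using tau_attained[OF base] by blast
        obtain xx where xx: "\<forall>z\<in>D. \<tau> q \<le> q * u z - v z"
          using tau_attained[OF base] by blast
        have up: "\<tau> x \<le> \<tau> q + (x - q) * u w0"
          using wy(3) w0D by (auto simp: algebra_simps)
        have "wy \<notin> K"
        proof
          assume "wy \<in> K"
          then have "x * u wy - v wy > \<tau> q + (x - q) * u w0" using d(2) x by auto
          then show False using up wy by simp
        qed
        then have close: "\<bar>u wy - u w0\<bar> < e" using wy unfolding K_def by auto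
        have lo: "\<tau> x \<ge> \<tau> q + (x - q) * u wy"
          using xx wy by (auto simp: algebra_simps)
        define E where "E = \<tau> x - \<tau> q - (x - q) * u w0"
        have "(x - q) * (u wy - u w0) \<le> E" "E \<le> 0"
          using up lo unfolding E_def by (auto simp: algebra_simps)
        then have "\<bar>E\<bar> \<le> \<bar>(x - q) * (u wy - u w0)\<bar>" by linarith
        also have "\<dots> = \<bar>x - q\<bar> * \<bar>u wy - u w0\<bar>" by (simp add: abs_mult)
        also have "\<dots> \<le> \<bar>x - q\<bar> * e" using close by (simp add: mult_left_mono)
        finally have Eb: "\<bar>E\<bar> \<le> \<bar>x - q\<bar> * e" .
        have "(\<tau> x - \<tau> q) / (x - q) - u w0 = E / (x - q)"
          using x(1) unfolding E_def by (simp add: field_simps)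
        then have "norm ((\<tau> x - \<tau> q) / (x - q) - u w0) = \<bar>E\<bar> / \<bar>x - q\<bar>" by simp
        also have "\<dots> \<le> e" using Eb x(1) by (simp add: divide_le_eq mult.commute)
        finally show ?thesis using e by linarith
      qed
      then show "\<exists>s>0. \<forall>x. x \<noteq> q \<and> norm (x - q) < s \<longrightarrow> norm ((\<tau> x - \<tau> q) / (x - q) - u w0) < r"
        using d(1) by blast
    qed
    then show "\<tau> differentiable (at q)" unfolding real_differentiable_def by blast
  qed
qed

end
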